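(* Let $M$ be a magma satisfying $(xy)z = xz$ and $x(yz) = xz$ for all $x,y,z\in M$. Then $M$ satisfies $xy = xz$ and $(xy)z = xy$ for all $x,y,z\in M$ if and only if $M$ avoids the $2$-element right zero band $2_{RZ}$ on $\{0,1\}$ with Cayley table \[ \begin{array}{c|cc} 2_{RZ} & 0 & 1 \\ \hline 0 & 0 & 1 \\ 1 & 0 & 1 \end{array}. \]
   Context: A magma is a nonempty set with a binary operation, written by juxtaposition. A magma $M$ avoids a magma $F$ if no submagma of $M$ is isomorphic to $F$. *)

theory Defs
  imports Main
begin

definition magma :: "'a set \<Rightarrow> ('a \<Rightarrow> 'a \<Rightarrow> 'a) \<Rightarrow> bool" where
  "magma M f \<longleftrightarrow> M \<noteq> {} \<and> (\<forall>x\<in>M. \<forall>y\<in>M. f x y \<in> M)"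

definition submagma :: "'a set \<Rightarrow> 'a set \<Rightarrow> ('a \<Rightarrow> 'a \<Rightarrow> 'a) \<Rightarrow> bool" where
  "submagma S M f \<longleftrightarrow> S \<noteq> {} \<and> S \<subseteq> M \<and> (\<forall>x\<in>S. \<forall>y\<in>S. f x y \<in> S)"

definition magma_iso :: "('b \<Rightarrow> 'a) \<Rightarrow> 'b set \<Rightarrow> ('b \<Rightarrow> 'b \<Rightarrow> 'b) \<Rightarrow> 'a set \<Rightarrow> ('a \<Rightarrow> 'a \<Rightarrow> 'a) \<Rightarrow> bool" where
  "magma_iso h A g B f \<longleftrightarrow> bij_betw h A B \<and> (\<forall>x\<in>A. \<forall>y\<in>A. h (g x y) = f (h x) (h y))"

definition avoids :: "'a set \<Rightarrow> ('a \<Rightarrow> 'a \<Rightarrow> 'a) \<Rightarrow> 'b set \<Rightarrow> ('b \<Rightarrow> 'b \<Rightarrow> 'b) \<Rightarrow> bool" where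
  "avoids M f F g \<longleftrightarrow> \<not> (\<exists>S h. submagma S M f \<and> magma_iso h F g S f)"

definition RZ2_carrier :: "nat set" where "RZ2_carrier = {0, 1}"
definition RZ2_op :: "nat \<Rightarrow> nat \<Rightarrow> nat" where "RZ2_op x y = y"

end

theory Submission
  imports Defs
begin

theorem mainTheorem17:
  fixes M :: "'a set" and f :: "'a \<Rightarrow> 'a \<Rightarrow> 'a"
  assumes "magma M f"
    and "\<forall>x\<in>M. \<forall>y\<in>M. \<forall>z\<in>M. f (f x y) z = f x z"
    and "\<forall>x\<in>M. \<forall>y\<in>M. \<forall>z\<in>M. f x (f y z) = f x z"
  shows "((\<forall>x\<in>M. \<forall>y\<in>M. \<forall>z\<in>M. f x y = f x z) \<and>
          (\<forall>x\<in>M. \<forall>y\<in>M. \<forall>z\<in>M. f (f x y) z = f x y))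
         \<longleftrightarrow> avoids M f RZ2_carrier RZ2_op"
proof
  assume H: "(\<forall>x\<in>M. \<forall>y\<in>M. \<forall>z\<in>M. f x y = f x z) \<and>
          (\<forall>x\<in>M. \<forall>y\<in>M. \<forall>z\<in>M. f (f x y) z = f x y)"
  show "avoids M f RZ2_carrier RZ2_op"
    unfolding avoids_def
  proof
    assume "\<exists>S h. submagma S M f \<and> magma_iso h RZ2_carrier RZ2_op S f"
    then obtain S h where S: "submagma S M f" and hi: "magma_iso h RZ2_carrier RZ2_op S f" by blast
    have b: "bij_betw h {0,1} S" and hom: "\<forall>x\<in>{0::nat,1}. \<forall>y\<in>{0,1}. h (RZ2_op x y) = f (h x) (h y)"
      using hi by (auto simp: magma_iso_def RZ2_carrier_def)
    have h0: "h 0 \<in> M" "h 1 \<in> M" using b S by (auto simp: bij_betw_def submagma_def)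
    have "h 1 \<noteq> h 0" using b by (auto simp: bij_betw_def inj_on_def)
    moreover have "h 1 = f (h 0) (h 1)" using hom by (simp add: RZ2_op_def)
    moreover have "h 0 = f (h 0) (h 0)" using hom by (simp add: RZ2_op_def)
    ultimately show False using H h0 by metis
  qed
next
  assume A: "avoids M f RZ2_carrier RZ2_op"
  have mc: "\<forall>x\<in>M. \<forall>y\<in>M. f x y \<in> M" using assms(1) by (simp add: magma_def)
  have key: "f x y = f x z" if x: "x \<in> M" and y: "y \<in> M" and z: "z \<in> M" for x y z
  proof (rule ccontr)
    assume ne: "f x y \<noteq> f x z"
    define a where "a = f x y"
    define b where "b = f x z"
    have aM: "a \<in> M" and bM: "b \<in> M" using mc x y z a_def b_def by auto
    have aa: "f a a = a" using assms(2,3) x y z mc unfolding a_def by simp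
    have bb: "f b b = b" using assms(2,3) x y z mc unfolding b_def by simp
    have ab: "f a b = b" using assms(2,3) x y z mc unfolding a_def b_def by simp
    have ba: "f b a = a" using assms(2,3) x y z mc unfolding a_def b_def by simp
    define h where "h = (\<lambda>n::nat. if n = 0 then a else b)"
    have "submagma {a,b} M f" using aM bM aa bb ab ba by (auto simp: submagma_def)
    moreover have "magma_iso h RZ2_carrier RZ2_op {a,b} f"
      unfolding magma_iso_def RZ2_carrier_def RZ2_op_def bij_betw_def inj_on_def h_def
      using ne aa bb ab ba a_def b_def by auto
    ultimately show False using A unfolding avoids_def by blast
  qed
  have "\<forall>x\<in>M. \<forall>y\<in>M. \<forall>z\<in>M. f (f x y) z = f x y"
    using key assms(2) by metis
  then show "(\<forall>x\<in>M. \<forall>y\<in>M. \<forall>z\<in>M. f x y = f x z) \<and>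
          (\<forall>x\<in>M. \<forall>y\<in>M. \<forall>z\<in>M. f (f x y) z = f x y)" using key by blast
qed

end
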